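(* Let $\alpha>0$, $0<p<1$ and $\beta_1,\beta_2,\beta_3>0$. Let $V_1,V_2,V_3$ be independent random variables with $V_i\sim EDW(\alpha,p,\beta_i)$, and set $X_1=\max\{V_1,V_3\}$, $X_2=\max\{V_2,V_3\}$. Then for $x_1,x_2\in\mathbb{N}_0$ the joint probability mass function $f_{X_1,X_2}(x_1,x_2)=P(X_1=x_1,X_2=x_2)$ is $$f_{X_1,X_2}(x_1,x_2)=\begin{cases} f_{EDW}(x_1;\alpha,p,\beta_1+\beta_3)\,f_{EDW}(x_2;\alpha,p,\beta_2) & \text{if } x_1<x_2,\\ f_{EDW}(x_1;\alpha,p,\beta_1)\,f_{EDW}(x_2;\alpha,p,\beta_2+\beta_3) & \text{if } x_2<x_1,\\ [1-p^{(x+1)^{\alpha}}]^{\beta_1}f_{EDW}(x;\alpha,p,\beta_2+\beta_3)-[1-p^{x^{\alpha}}]^{\beta_1+\beta_3}f_{EDW}(x;\alpha,p,\beta_2) & \text{if } x_1=x_2=x.\end{cases}$$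
   Context: The exponentiated discrete Weibull distribution $EDW(\alpha,p,\beta)$ ($\alpha,\beta>0$, $0<p<1$) is the distribution on $\mathbb{N}_0=\{0,1,2,\dots\}$ with cumulative distribution function $F_{EDW}(x;\alpha,p,\beta)=[1-p^{([x]+1)^{\alpha}}]^{\beta}$ for real $x\ge 0$, where $[x]$ is the largest integer $\le x$; its probability mass function is $f_{EDW}(x;\alpha,p,\beta)=[1-p^{(x+1)^{\alpha}}]^{\beta}-[1-p^{x^{\alpha}}]^{\beta}$, $x\in\mathbb{N}_0$ (with $p^{0}=1$). *)

theory Defs
  imports "HOL-Probability.Probability"
begin

definition F_EDW :: "real \<Rightarrow> real \<Rightarrow> real \<Rightarrow> nat \<Rightarrow> real" where
  "F_EDW \<alpha> p \<beta> x = (1 - p powr ((real x + 1) powr \<alpha>)) powr \<beta>"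

definition f_EDW :: "real \<Rightarrow> real \<Rightarrow> real \<Rightarrow> nat \<Rightarrow> real" where
  "f_EDW \<alpha> p \<beta> x =
     (1 - p powr ((real x + 1) powr \<alpha>)) powr \<beta> - (1 - p powr (real x powr \<alpha>)) powr \<beta>"

end

theory Submission
  imports Defs
begin

lemma tele_lt:
  assumes "prob_space M" and meas: "X \<in> measurable M (count_space UNIV)"
    and pm: "\<And>x. measure M {\<omega> \<in> space M. X \<omega> = x} = G (Suc x) - G x" and G0: "G 0 = 0"
  shows "measure M {\<omega> \<in> space M. X \<omega> < k} = G k"
proof (induction k)
  case 0
  then show ?case using G0 by simp
next
  case (Suc k)
  interpret prob_space M by fact
  have s1: "{\<omega> \<in> space M. X \<omega> < k} \<in> sets M" using meas by measurable
  have s2: "{\<omega> \<in> space M. X \<omega> = k} \<in> sets M" using meas by measurable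
  have eq: "{\<omega> \<in> space M. X \<omega> < Suc k} = {\<omega> \<in> space M. X \<omega> < k} \<union> {\<omega> \<in> space M. X \<omega> = k}"
    by auto
  have "measure M {\<omega> \<in> space M. X \<omega> < Suc k} = measure M {\<omega> \<in> space M. X \<omega> < k} + measure M {\<omega> \<in> space M. X \<omega> = k}"
    unfolding eq by (rule finite_measure_Union[OF s1 s2]) auto
  then show ?case using Suc pm[of k] by simp
qed

theorem mainTheorem2:
  fixes M :: "'a measure" and V :: "nat \<Rightarrow> 'a \<Rightarrow> nat"
    and \<alpha> p \<beta>1 \<beta>2 \<beta>3 :: real and x1 x2 :: nat
  assumes "prob_space M"
    and "\<alpha> > 0" and "0 < p" and "p < 1"
    and "\<beta>1 > 0" and "\<beta>2 > 0" and "\<beta>3 > 0"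
    and "prob_space.indep_vars M (\<lambda>_. count_space UNIV) V {1, 2, 3}"
    and "\<And>x. measure M {\<omega> \<in> space M. V 1 \<omega> = x} = f_EDW \<alpha> p \<beta>1 x"
    and "\<And>x. measure M {\<omega> \<in> space M. V 2 \<omega> = x} = f_EDW \<alpha> p \<beta>2 x"
    and "\<And>x. measure M {\<omega> \<in> space M. V 3 \<omega> = x} = f_EDW \<alpha> p \<beta>3 x"
  shows "measure M {\<omega> \<in> space M. max (V 1 \<omega>) (V 3 \<omega>) = x1 \<and> max (V 2 \<omega>) (V 3 \<omega>) = x2} =
    (if x1 < x2 then f_EDW \<alpha> p (\<beta>1 + \<beta>3) x1 * f_EDW \<alpha> p \<beta>2 x2
     else if x2 < x1 then f_EDW \<alpha> p \<beta>1 x1 * f_EDW \<alpha> p (\<beta>2 + \<beta>3) x2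
     else (1 - p powr ((real x1 + 1) powr \<alpha>)) powr \<beta>1 * f_EDW \<alpha> p (\<beta>2 + \<beta>3) x1
          - (1 - p powr (real x1 powr \<alpha>)) powr (\<beta>1 + \<beta>3) * f_EDW \<alpha> p \<beta>2 x1)"
proof -
  interpret prob_space M by fact
  define g where "g k = 1 - p powr (real k powr \<alpha>)" for k :: nat
  define G where "G b k = g k powr b" for b and k :: nat
  have G0: "G b 0 = 0" for b unfolding G_def g_def using assms(3) by simp
  have fG: "f_EDW \<alpha> p b x = G b (Suc x) - G b x" for b x
    unfolding f_EDW_def G_def g_def by (simp add: add.commute)
  have Gadd: "G (a + b) k = G a k * G b k" for a b k
    unfolding G_def by (simp add: powr_add)
  have iv: "indep_vars (\<lambda>_. count_space UNIV) V {1, 2, 3}" using assms(8) by simp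
  have meas: "V i \<in> measurable M (count_space UNIV)" if "i \<in> {1,2,3}" for i
    using iv that unfolding indep_vars_def by auto
  have m1: "V 1 \<in> measurable M (count_space UNIV)"
   and m2: "V 2 \<in> measurable M (count_space UNIV)"
   and m3: "V 3 \<in> measurable M (count_space UNIV)" using meas by auto
  have L1: "measure M {\<omega> \<in> space M. V 1 \<omega> < k} = G \<beta>1 k" for k
    by (rule tele_lt[OF assms(1) m1]) (use assms(9) fG G0 in auto)
  have L2: "measure M {\<omega> \<in> space M. V 2 \<omega> < k} = G \<beta>2 k" for k
    by (rule tele_lt[OF assms(1) m2]) (use assms(10) fG G0 in auto)
  have L3: "measure M {\<omega> \<in> space M. V 3 \<omega> < k} = G \<beta>3 k" for k
    by (rule tele_lt[OF assms(1) m3]) (use assms(11) fG G0 in auto)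
  have P3: "measure M {\<omega> \<in> space M. V 1 \<omega> < a \<and> V 2 \<omega> < b \<and> V 3 \<omega> < c}
      = G \<beta>1 a * G \<beta>2 b * G \<beta>3 c" for a b c
  proof -
    define A where "A i = (if i = (1::nat) then {..<a} else if i = 2 then {..<b} else {..<c})" for i
    have "prob (\<Inter>i\<in>{1,2,3}. V i -` A i \<inter> space M) = (\<Prod>i\<in>{1,2,3}. prob (V i -` A i \<inter> space M))"
      by (rule indep_varsD[OF iv]) auto
    moreover have "(\<Inter>i\<in>{1,2,3}. V i -` A i \<inter> space M) = {\<omega> \<in> space M. V 1 \<omega> < a \<and> V 2 \<omega> < b \<and> V 3 \<omega> < c}"
      by (auto simp: A_def)
    moreover have "V i -` A i \<inter> space M = {\<omega> \<in> space M. V i \<omega> < (if i = (1::nat) then a else if i = 2 then b else c)}" for i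
      by (auto simp: A_def)
    ultimately show ?thesis using L1 L2 L3 by simp
  qed
  define S where "S a b = {\<omega> \<in> space M. max (V 1 \<omega>) (V 3 \<omega>) < a \<and> max (V 2 \<omega>) (V 3 \<omega>) < b}" for a b
  have Em: "{\<omega> \<in> space M. V i \<omega> < k} \<in> sets M" if "i \<in> {1,2,3}" for i k
  proof -
    have "{\<omega> \<in> space M. V i \<omega> < k} = V i -` {..<k} \<inter> space M" by auto
    then show ?thesis using measurable_sets[OF meas[OF that], of "{..<k}"] by simp
  qed
  have Sm: "S a b \<in> sets M" for a b
  proof -
    have "S a b = {\<omega> \<in> space M. V 1 \<omega> < a} \<inter> {\<omega> \<in> space M. V 3 \<omega> < a} \<inter>
       {\<omega> \<in> space M. V 2 \<omega> < b} \<inter> {\<omega> \<in> space M. V 3 \<omega> < b}" unfolding S_def by auto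
    then show ?thesis using Em[of 1] Em[of 2] Em[of 3] by auto
  qed
  have K: "measure M (S a b) = G \<beta>1 a * G \<beta>2 b * G \<beta>3 (min a b)" for a b
  proof -
    have "S a b = {\<omega> \<in> space M. V 1 \<omega> < a \<and> V 2 \<omega> < b \<and> V 3 \<omega> < min a b}"
      unfolding S_def by auto
    then show ?thesis using P3[of a b "min a b"] by simp
  qed
  have ev: "{\<omega> \<in> space M. max (V 1 \<omega>) (V 3 \<omega>) = x1 \<and> max (V 2 \<omega>) (V 3 \<omega>) = x2}
     = S (Suc x1) (Suc x2) - (S x1 (Suc x2) \<union> S (Suc x1) x2)"
    unfolding S_def by auto
  have int: "S x1 (Suc x2) \<inter> S (Suc x1) x2 = S x1 x2" unfolding S_def by auto
  have "measure M (S x1 (Suc x2) \<union> S (Suc x1) x2) = measure M (S x1 (Suc x2)) + measure M (S (Suc x1) x2) - measure M (S x1 x2)"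
    using measure_Un3[of "S x1 (Suc x2)" M "S (Suc x1) x2"] Sm int by (simp add: fmeasurable_eq_sets)
  moreover have "measure M (S (Suc x1) (Suc x2) - (S x1 (Suc x2) \<union> S (Suc x1) x2)) =
     measure M (S (Suc x1) (Suc x2)) - measure M (S x1 (Suc x2) \<union> S (Suc x1) x2)"
    by (rule finite_measure_Diff) (use Sm in \<open>auto simp: S_def\<close>)
  ultimately have main: "measure M {\<omega> \<in> space M. max (V 1 \<omega>) (V 3 \<omega>) = x1 \<and> max (V 2 \<omega>) (V 3 \<omega>) = x2}
     = measure M (S (Suc x1) (Suc x2)) - measure M (S x1 (Suc x2)) - measure M (S (Suc x1) x2) + measure M (S x1 x2)"
    unfolding ev by simp
  have r1: "(1 - p powr ((real x1 + 1) powr \<alpha>)) powr \<beta>1 = G \<beta>1 (Suc x1)"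
    unfolding G_def g_def by (simp add: add.commute)
  have r2: "(1 - p powr (real x1 powr \<alpha>)) powr (\<beta>1 + \<beta>3) = G \<beta>1 x1 * G \<beta>3 x1"
    unfolding G_def g_def by (simp add: powr_add)
  consider "x1 < x2" | "x2 < x1" | "x1 = x2" by linarith
  then show ?thesis
  proof cases
    case 1
    then have "min (Suc x1) (Suc x2) = Suc x1" "min x1 (Suc x2) = x1" "min (Suc x1) x2 = Suc x1" "min x1 x2 = x1"
      by auto
    then show ?thesis using 1 unfolding main K r1 r2 fG Gadd by (simp add: algebra_simps)
  next
    case 2
    then have "min (Suc x1) (Suc x2) = Suc x2" "min x1 (Suc x2) = Suc x2" "min (Suc x1) x2 = x2" "min x1 x2 = x2"
      by auto
    then show ?thesis using 2 unfolding main K r1 r2 fG Gadd by (simp add: algebra_simps)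
  next
    case 3
    then show ?thesis unfolding main K r1 r2 fG Gadd by (simp add: algebra_simps)
  qed
qed

end
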